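(* For $n\in\mathcal{N}_{z_q}$, let $L_n=\{(x_\gamma,y_\gamma):\gamma\in\Gamma_{z_q,n}\}$ and \[ \mathcal{L}_n=\{(x,y)\in\mathbb{R}^2:\ x^2+y^2=n^2-4\lambda^4,\ y\equiv n \pmod{2\lambda^2},\ x\equiv 0\pmod{\lambda}\}. \] Then $L_n=\mathcal{L}_n$, and $|\mathcal{L}_n|=2c_n\,r_K(n^2-4\lambda^4)$, where $c_n=1/2$ if ($q$ even and $2\mid n$) or ($q$ odd and $q\mid 2n$), and $c_n=1/4$ otherwise.
   Context: Let $q\in\{3,4,7,8,11,19,43,67,163\}$, $K$ the imaginary quadratic field of discriminant $-q$ (class number one), ring of integers $\mathcal{O}_K$; $r_K(M)$ is the number of elements of $\mathcal{O}_K$ of norm $M$. Let $z_q=\mu+i\lambda$ with $\mu=0$ if $q\in\{4,8\}$, $\mu=1/2$ otherwise, $\lambda=\sqrt q/2$. $\mathbb{H}$ is the upper half-plane with hyperbolic distance $\rho$, $\cosh\rho(z,w)=1+\frac{|z-w|^2}{2\,\mathrm{Im}(z)\mathrm{Im}(w)}$; $\Gamma=\mathrm{PSL}(2,\mathbb{Z})$; $\mathcal{R}(\gamma;z_q)=2\lambda^2\cosh\rho(z_q,\gamma z_q)$, $\mathcal{N}_{z_q}=\{\mathcal{R}(\gamma;z_q):\gamma\in\Gamma\}$, $\Gamma_{z_q,n}=\{\gamma:\mathcal{R}(\gamma;z_q)=n\}$. Congruences $y\equiv n\pmod{2\lambda^2}$, $x\equiv0\pmod\lambda$ mean $(y-n)/(2\lambda^2)\in\mathbb{Z}$,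 $x/\lambda\in\mathbb{Z}$. For $\gamma=\begin{pmatrix}a&b\\c&d\end{pmatrix}$ with $n=\mathcal{R}(\gamma;z_q)$: $x_\gamma=2\lambda((\mu a+b)(\mu c+d)+\lambda^2ac-\mu((\mu c+d)^2+\lambda^2c^2))$, $y_\gamma=n-2\lambda^2((\mu c+d)^2+\lambda^2c^2)$. *)

theory Defs
  imports Complex_Main
begin

text \<open>The admissible discriminants: K = Q(sqrt(-q)) has class number one.\<close>
definition admissible_q :: "nat set" where
  "admissible_q = {3, 4, 7, 8, 11, 19, 43, 67, 163}"

definition mu_q :: "nat \<Rightarrow> real" where
  "mu_q q = (if q \<in> {4, 8} then 0 else 1/2)"

definition lam_q :: "nat \<Rightarrow> real" where
  "lam_q q = sqrt (real q) / 2"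

definition z_q :: "nat \<Rightarrow> complex" where
  "z_q q = Complex (mu_q q) (lam_q q)"

text \<open>Ring of integers O_K = Z + Z z_q (z_q is (1+sqrt(-q))/2, i, or i sqrt 2);
  the norm of a + b z_q is its squared absolute value.
  r_K(M) = number of elements of O_K of norm M.\<close>
definition O_K :: "nat \<Rightarrow> complex set" where
  "O_K q = {of_int a + of_int b * z_q q | a b. True}"

definition r_K :: "nat \<Rightarrow> real \<Rightarrow> nat" where
  "r_K q M = card {\<alpha> \<in> O_K q. (cmod \<alpha>)\<^sup>2 = M}"

text \<open>SL(2,Z) as integer quadruples (a,b,c,d) with ad - bc = 1; elements of
  PSL(2,Z) are their classes modulo sign.\<close>
definition SL2Z :: "(int \<times> int \<times> int \<times> int) set" where
  "SL2Z = {(a, b, c, d). a * d - b * c = 1}"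

definition moebius :: "int \<times> int \<times> int \<times> int \<Rightarrow> complex \<Rightarrow> complex" where
  "moebius g z = (case g of (a, b, c, d) \<Rightarrow>
      (of_int a * z + of_int b) / (of_int c * z + of_int d))"

definition cosh_rho :: "complex \<Rightarrow> complex \<Rightarrow> real" where
  "cosh_rho z w = 1 + (cmod (z - w))\<^sup>2 / (2 * Im z * Im w)"

definition RR :: "nat \<Rightarrow> int \<times> int \<times> int \<times> int \<Rightarrow> real" where
  "RR q g = 2 * (lam_q q)\<^sup>2 * cosh_rho (z_q q) (moebius g (z_q q))"

definition N_z :: "nat \<Rightarrow> real set" where
  "N_z q = {RR q g | g. g \<in> SL2Z}"

definition Gamma_n :: "nat \<Rightarrow> real \<Rightarrow> (int \<times> int \<times> int \<times> int) set" where
  "Gamma_n q n = {g \<in> SL2Z. RR q g = n}"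

definition x_g :: "nat \<Rightarrow> int \<times> int \<times> int \<times> int \<Rightarrow> real" where
  "x_g q g = (case g of (a, b, c, d) \<Rightarrow>
     (let m = mu_q q; l = lam_q q in
      2 * l * ((m * a + b) * (m * c + d) + l\<^sup>2 * a * c
                 - m * ((m * c + d)\<^sup>2 + l\<^sup>2 * c\<^sup>2))))"

definition y_g :: "nat \<Rightarrow> int \<times> int \<times> int \<times> int \<Rightarrow> real" where
  "y_g q g = (case g of (a, b, c, d) \<Rightarrow>
     (let m = mu_q q; l = lam_q q in
      RR q g - 2 * l\<^sup>2 * ((m * c + d)\<^sup>2 + l\<^sup>2 * c\<^sup>2)))"

definition L_n :: "nat \<Rightarrow> real \<Rightarrow> (real \<times> real) set" where
  "L_n q n = (\<lambda>g. (x_g q g, y_g q g)) ` Gamma_n q n"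

definition calL_n :: "nat \<Rightarrow> real \<Rightarrow> (real \<times> real) set" where
  "calL_n q n = {(x, y). x\<^sup>2 + y\<^sup>2 = n\<^sup>2 - 4 * (lam_q q)^4
      \<and> (y - n) / (2 * (lam_q q)\<^sup>2) \<in> \<int> \<and> x / lam_q q \<in> \<int>}"

text \<open>c_n; divisibility for real n is read as in the congruence convention:
  "2 divides n" means n/2 in Z, "q divides 2n" means 2n/q in Z.\<close>
definition c_n :: "nat \<Rightarrow> real \<Rightarrow> real" where
  "c_n q n = (if (even q \<and> n / 2 \<in> \<int>) \<or> (odd q \<and> 2 * n / real q \<in> \<int>)
              then 1/2 else 1/4)"

end

theory Submission
  imports Defs "HOL-Computational_Algebra.Primes"
begin


definition tq :: "nat \<Rightarrow> int" where "tq q = (if q \<in> {4,8} then 0 else 1)"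
definition Nq :: "nat \<Rightarrow> int" where "Nq q = (int q + tq q) div 4"

lemma adm_cases: "q \<in> admissible_q \<Longrightarrow> q=3 \<or> q=4 \<or> q=7 \<or> q=8 \<or> q=11 \<or> q=19 \<or> q=43 \<or> q=67 \<or> q=163"
  by (auto simp: admissible_q_def)

lemma adm_param:
  assumes "q \<in> admissible_q"
  shows "mu_q q = of_int (tq q) / 2" "(lam_q q)\<^sup>2 = real q / 4" "lam_q q > 0"
    "int q = 4 * Nq q - (tq q)\<^sup>2" "tq q = 0 \<or> tq q = 1" "odd q \<longleftrightarrow> tq q = 1"
    "q > 0"
  using adm_cases[OF assms]
  by (auto simp: mu_q_def tq_def Nq_def lam_q_def power_divide)



lemma RR_generic:
  fixes a b c d t :: int and l :: real
  assumes det: "a*d - b*c = 1" and l: "l > 0"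
  defines "z \<equiv> Complex (of_int t / 2) l"
  shows "2*l\<^sup>2*cosh_rho z (moebius (a,b,c,d) z) = 2*l\<^sup>2 + (cmod (z*(of_int c*z+of_int d) - (of_int a*z+of_int b)))\<^sup>2"
proof -
  define D where "D = of_int c * z + of_int d"
  define E where "E = z*D - (of_int a*z+of_int b)"
  have ReD: "Re D = c*t/2 + d" and ImD: "Im D = c*l" by (simp_all add: D_def z_def)
  have D0: "D \<noteq> 0"
  proof
    assume "D = 0"
    then have "c*l = 0" "c*t/2 + d = 0" using ReD ImD by auto
    then have "c = 0" "d = 0" using l by auto
    then show False using det by simp
  qed
  have nD: "(cmod D)\<^sup>2 > 0" using D0 by simp
  have w: "moebius (a,b,c,d) z = (of_int a*z+of_int b) / D" by (simp add: moebius_def D_def)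
  have Imw: "Im (moebius (a,b,c,d) z) = l / (cmod D)\<^sup>2"
  proof -
    have "Im ((of_int a*z+of_int b) / D) = (Re D * Im (of_int a*z+of_int b) - Im D * Re (of_int a*z+of_int b)) / (cmod D)\<^sup>2"
      by (simp add: Im_divide cmod_power2)
    also have "Re D * Im (of_int a*z+of_int b) - Im D * Re (of_int a*z+of_int b) = l * (a*d - b*c)"
      by (simp add: ReD ImD z_def algebra_simps)
    finally show ?thesis using w det by simp
  qed
  have zw: "z - moebius (a,b,c,d) z = E / D"
    using D0 by (simp add: w E_def field_simps)
  have "cmod (z - moebius (a,b,c,d) z) ^2 = (cmod E)\<^sup>2 / (cmod D)\<^sup>2"
    by (simp add: zw norm_divide power_divide)
  moreover have "Im z = l" by (simp add: z_def)
  ultimately have "cosh_rho z (moebius (a,b,c,d) z) = 1 + ((cmod E)\<^sup>2 / (cmod D)\<^sup>2) / (2 * l * (l / (cmod D)\<^sup>2))"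
    unfolding cosh_rho_def Imw by simp
  also have "\<dots> = 1 + (cmod E)\<^sup>2 / (2*l\<^sup>2)" using nD l D0 by (simp add: field_simps power2_eq_square)
  finally show ?thesis using l by (simp add: E_def D_def field_simps)
qed


lemma poly_RR:
  fixes a b c d t N l :: real
  assumes "l\<^sup>2 * 4 = 4 * N - t\<^sup>2" "a*d - b*c = 1"
  shows "4 * l\<^sup>2 + ((t * (c * t / 2 + d) / 2 - l * (c * l) - (a * t / 2 + b))\<^sup>2 * 2 +
         (t * (c * l) / 2 + l * (c * t / 2 + d) - a * l)\<^sup>2 * 2) =
        2 * N * (N * c\<^sup>2 + t * c * d + d\<^sup>2) + (2 * (N * a\<^sup>2) + 2 * (t * a * b) + 2 * b\<^sup>2)
       - t * (2 * N * a * c + t * (a * d + b * c) + 2 * b * d)"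
  using assms apply (simp add: field_simps power2_eq_square) by algebra
lemma poly_x:
  fixes a b c d t N l :: real
  assumes "l\<^sup>2 * 4 = 4 * N - t\<^sup>2"
  shows "2 * ((t * a / 2 + b) * (t * c / 2 + d)) + 2 * (l\<^sup>2 * a * c) - t * ((t * c / 2 + d)\<^sup>2 + l\<^sup>2 * c\<^sup>2) =
     2 * N * a * c + t * (a * d + b * c) + 2 * b * d - t * (N * c\<^sup>2 + t * c * d + d\<^sup>2)"
  using assms apply (simp add: field_simps power2_eq_square) by algebra
lemma poly_y:
  fixes c d t N l :: real
  assumes "l\<^sup>2 * 4 = 4 * N - t\<^sup>2"
  shows "4 * (l\<^sup>2 * ((t * c / 2 + d)\<^sup>2 + l\<^sup>2 * c\<^sup>2)) =
        (4 * N - t\<^sup>2) * (N * c\<^sup>2 + t * c * d + d\<^sup>2)"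
  using assms apply (simp add: field_simps power2_eq_square) by algebra


definition act :: "int\<times>int\<times>int \<Rightarrow> int\<times>int\<times>int\<times>int \<Rightarrow> int\<times>int\<times>int" where
  "act F g = (case F of (A,B,C) \<Rightarrow> case g of (a,b,c,d) \<Rightarrow>
     (A*a\<^sup>2+B*a*b+C*b\<^sup>2, 2*A*a*c + B*(a*d+b*c) + 2*C*b*d, A*c\<^sup>2+B*c*d+C*d\<^sup>2))"

lemma RR_act:
  assumes q: "q \<in> admissible_q" and g: "(a,b,c,d) \<in> SL2Z"
    and F: "act (Nq q, tq q, 1) (a,b,c,d) = (A,B,C)"
  shows "RR q (a,b,c,d) = (2*Nq q*C + 2*A - tq q*B)/2"
    "RR q (a,b,c,d) > 0"
    "x_g q (a,b,c,d) = lam_q q * (B - tq q * C)"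
    "y_g q (a,b,c,d) = RR q (a,b,c,d) - (real q / 2) * C"
proof -
  define t where "t = tq q"
  define N where "N = Nq q"
  define l where "l = lam_q q"
  have det: "a*d - b*c = 1" using g by (simp add: SL2Z_def)
  have qq: "real q = 4*N - t\<^sup>2"
  proof -
    have "real_of_int (int q) = real_of_int (4*N - t\<^sup>2)" using adm_param(4)[OF q] by (simp add: N_def t_def)
    then show ?thesis by simp
  qed
  have l0: "l > 0" and l2: "l\<^sup>2 = (4*N - t\<^sup>2)/4" and mu: "mu_q q = t/2"
    using adm_param[OF q] qq unfolding t_def N_def l_def by simp_all
  have detR: "real_of_int a * real_of_int d - real_of_int b * real_of_int c = 1"
  proof -
    have "real_of_int (a*d - b*c) = 1" using det by simp
    then show ?thesis by simp
  qed
  have Fe: "A = N*a\<^sup>2+t*a*b+b\<^sup>2" "B = 2*N*a*c + t*(a*d+b*c) + 2*b*d" "C = N*c\<^sup>2+t*c*d+d\<^sup>2"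
    using F by (auto simp: act_def N_def t_def)
  have z: "z_q q = Complex (of_int t / 2) l" by (simp add: z_q_def mu l_def)
  have RR1: "RR q (a,b,c,d) = 2*l\<^sup>2 + (cmod (z_q q*(of_int c*z_q q+of_int d) - (of_int a*z_q q+of_int b)))\<^sup>2"
    unfolding RR_def z using RR_generic[OF det l0] by (simp add: l_def)
  also have "\<dots> = (2*N*C + 2*A - t*B)/2"
    unfolding z cmod_power2 Fe using l2 detR
    apply simp
    by (rule poly_RR)
  finally show "RR q (a,b,c,d) = (2*Nq q*C + 2*A - tq q*B)/2" by (simp add: N_def t_def)
  show "RR q (a,b,c,d) > 0" using RR1 l0 by (simp add: add_pos_nonneg)
  show "x_g q (a,b,c,d) = lam_q q * (B - tq q * C)"
    unfolding x_g_def Fe Let_def mu l_def[symmetric] t_def[symmetric] using l2 apply simp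
    using poly_x by blast
  show "y_g q (a,b,c,d) = RR q (a,b,c,d) - (real q / 2) * C"
    unfolding y_g_def Fe Let_def mu l_def[symmetric] t_def[symmetric] using l2 qq apply simp
    using poly_y by blast
qed



lemma red_table:
  "list_all (\<lambda>q. list_all (\<lambda>A. list_all (\<lambda>b. b \<le> A \<longrightarrow> 3*A\<^sup>2 \<le> q \<longrightarrow> \<not> (4*A) dvd (b\<^sup>2 + q))
      [0,1,2,3,4,5,6,7::nat]) [2,3,4,5,6,7]) [3,4,7,8,11,19,43,67,163]"
  by simp

lemma reduced_impossible:
  fixes A B C :: int
  assumes q: "q \<in> admissible_q" and A2: "2 \<le> A" and BA: "\<bar>B\<bar> \<le> A" and AC: "A \<le> C"
    and disc: "B\<^sup>2 - 4*A*C = - int q"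
  shows False
proof -
  have "\<bar>B\<bar> \<le> \<bar>A\<bar>" using BA A2 by simp
  then have "B\<^sup>2 \<le> A\<^sup>2" using abs_le_square_iff by blast
  moreover have "A*A \<le> A*C" using AC A2 by (simp add: mult_left_mono)
  ultimately have h3: "3*A\<^sup>2 \<le> int q" using disc by (simp add: power2_eq_square)
  have q163: "q \<le> 163" using adm_cases[OF q] by auto
  have A7: "A \<le> 7"
  proof (rule ccontr)
    assume "\<not> A \<le> 7"
    then have "8*8 \<le> A*A" by (intro mult_mono) auto
    then show False using h3 q163 by (simp add: power2_eq_square)
  qed
  define a where "a = nat A"
  define b where "b = nat \<bar>B\<bar>"
  have Aa: "A = int a" and Bb: "B\<^sup>2 = int (b\<^sup>2)" using A2 by (simp_all add: a_def b_def)
  have "int (4*a) dvd int (b\<^sup>2 + q)"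
  proof -
    have "int (b\<^sup>2 + q) = int (4*a) * C" using disc Aa Bb by simp
    then show ?thesis by simp
  qed
  then have dv: "(4*a) dvd (b\<^sup>2 + q)" by (simp only: int_dvd_int_iff)
  have "int (3*a\<^sup>2) \<le> int q" using h3 Aa by simp
  then have "3*a\<^sup>2 \<le> q" by (simp only: of_nat_le_iff)
  moreover have "b \<le> a" using BA Aa by (simp add: b_def)
  moreover have "a \<in> set [2,3,4,5,6,7]" using A2 A7 Aa by auto
  moreover have "b \<in> set [0,1,2,3,4,5,6,7]" using \<open>b \<le> a\<close> \<open>a \<in> set [2,3,4,5,6,7]\<close> by auto
  moreover have "q \<in> set [3,4,7,8,11,19,43,67,163]" using adm_cases[OF q] by auto
  ultimately show False using red_table dv unfolding list_all_iff by blast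
qed



definition mmul :: "int\<times>int\<times>int\<times>int \<Rightarrow> int\<times>int\<times>int\<times>int \<Rightarrow> int\<times>int\<times>int\<times>int" where
  "mmul g h = (case g of (a,b,c,d) \<Rightarrow> case h of (e,f,u,v) \<Rightarrow> (a*e+b*u, a*f+b*v, c*e+d*u, c*f+d*v))"
definition minv :: "int\<times>int\<times>int\<times>int \<Rightarrow> int\<times>int\<times>int\<times>int" where
  "minv g = (case g of (a,b,c,d) \<Rightarrow> (d,-b,-c,a))"

lemma act_comp: "act (act F g) h = act F (mmul h g)"
  by (cases F; cases g; cases h) (simp add: act_def mmul_def power2_eq_square algebra_simps)

lemma act_id: "act F (1,0,0,1) = F"
  by (cases F) (simp add: act_def)

lemma minv_mul: "g \<in> SL2Z \<Longrightarrow> mmul (minv g) g = (1,0,0,1)"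
  by (cases g) (auto simp: SL2Z_def mmul_def minv_def algebra_simps)

lemma minv_SL: "g \<in> SL2Z \<Longrightarrow> minv g \<in> SL2Z"
  by (cases g) (auto simp: SL2Z_def minv_def algebra_simps)

lemma mmul_SL: "g \<in> SL2Z \<Longrightarrow> h \<in> SL2Z \<Longrightarrow> mmul g h \<in> SL2Z"
proof (cases g; cases h)
  fix a b c d e f u v
  assume "g \<in> SL2Z" "h \<in> SL2Z" and gh: "g = (a,b,c,d)" "h = (e,f,u,v)"
  then have "a*d - b*c = 1" "e*v - f*u = 1" by (auto simp: SL2Z_def)
  then have "(a*e+b*u)*(c*f+d*v) - (a*f+b*v)*(c*e+d*u) = (a*d-b*c)*(e*v-f*u)" by (simp add: algebra_simps)
  then show ?thesis using gh \<open>a*d - b*c = 1\<close> \<open>e*v - f*u = 1\<close> by (simp add: SL2Z_def mmul_def)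
qed

lemma disc_act:
  assumes "g \<in> SL2Z" "act (A,B,C) g = (A',B',C')"
  shows "B'\<^sup>2 - 4*A'*C' = B\<^sup>2 - 4*A*C"
proof (cases g)
  fix a b c d assume g: "g = (a,b,c,d)"
  then have det: "a*d - b*c = 1" using assms by (simp add: SL2Z_def)
  have "B'\<^sup>2 - 4*A'*C' = (B\<^sup>2 - 4*A*C) * (a*d-b*c)\<^sup>2"
    using assms(2) g by (auto simp: act_def power2_eq_square algebra_simps)
  then show ?thesis using det by simp
qed



lemma classno_base:
  fixes B C :: int
  assumes q: "q \<in> admissible_q" and disc: "B\<^sup>2 - 4*1*C = - int q"
  shows "\<exists>g\<in>SL2Z. act (Nq q, tq q, 1) g = (1,B,C)"
proof -
  define t where "t = tq q"
  define N where "N = Nq q"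
  have qq: "int q = 4*N - t\<^sup>2" using adm_param(4)[OF q] by (simp add: N_def t_def)
  have e1: "(B-t)*(B+t) = 4*(C - N)" using disc qq by (simp add: algebra_simps power2_eq_square)
  have "even ((B-t)*(B+t))" unfolding e1 by simp
  then have "even (B-t) \<or> even (B+t)" by simp
  moreover have "B + t = (B - t) + 2*t" by simp
  ultimately have "even (B+t)" by (metis even_add even_mult_iff even_numeral)
  then obtain d where d: "B + t = 2*d" by (metis dvd_def)
  have Cd: "C = N - t*d + d\<^sup>2"
  proof -
    have Bd: "B = 2*d - t" using d by simp
    have "4*C = B\<^sup>2 + int q" using disc by simp
    also have "\<dots> = (2*d-t)\<^sup>2 + (4*N - t\<^sup>2)" using Bd qq by simp
    also have "\<dots> = 4*(N - t*d + d\<^sup>2)" by (simp add: algebra_simps power2_eq_square)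
    finally have "4*C = 4*(N - t*d + d\<^sup>2)" .
    then show ?thesis by simp
  qed
  show ?thesis
  proof (rule bexI[of _ "(0,1,-1,d)"])
    show "(0,1,-1,d) \<in> SL2Z" by (simp add: SL2Z_def)
    show "act (Nq q, tq q, 1) (0,1,-1,d) = (1,B,C)"
      using d Cd by (simp add: act_def N_def[symmetric] t_def[symmetric] algebra_simps power2_eq_square)
  qed
qed

lemma classno:
  assumes q: "q \<in> admissible_q"
  shows "0 < A \<Longrightarrow> B\<^sup>2 - 4*A*C = - int q \<Longrightarrow> \<exists>g\<in>SL2Z. act (Nq q, tq q, 1) g = (A,B,C)"
proof (induction "nat A" arbitrary: A B C rule: less_induct)
  case less
  show ?case
  proof (cases "A = 1")
    case True
    then show ?thesis using classno_base[OF q] less.prems by simp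
  next
    case False
    then have A2: "2 \<le> A" using less.prems by simp
    define k where "k = (A - B) div (2*A)"
    define r where "r = (A - B) mod (2*A)"
    have r: "0 \<le> r" "r < 2*A" using A2 by (simp_all add: r_def)
    have kr: "A - B = 2*A*k + r" by (simp add: k_def r_def)
    define B1 where "B1 = B + 2*k*A"
    define C1 where "C1 = A*k\<^sup>2 + B*k + C"
    have B1: "B1 = A - r" using kr by (simp add: B1_def algebra_simps)
    have T: "act (A,B,C) (1,0,k,1) = (A,B1,C1)"
      by (simp add: act_def B1_def C1_def algebra_simps)
    have TS: "(1,0,k,1) \<in> SL2Z" by (simp add: SL2Z_def)
    have d1: "B1\<^sup>2 - 4*A*C1 = - int q" using disc_act[OF TS T] less.prems by simp
    show ?thesis
    proof (cases "C1 < A")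
      case True
      have "0 \<le> B1\<^sup>2" by simp
      then have "0 < A*C1" using d1 adm_param(7)[OF q] by linarith
      then have C1p: "0 < C1" using A2 by (simp add: zero_less_mult_iff)
      have S: "act (A,B1,C1) (0,1,-1,0) = (C1,-B1,A)" by (simp add: act_def)
      have SS: "(0,1,-1,0) \<in> SL2Z" by (simp add: SL2Z_def)
      have d2: "(-B1)\<^sup>2 - 4*C1*A = - int q" using d1 by (simp add: algebra_simps)
      have "nat C1 < nat A" using True C1p by simp
      then obtain g where g: "g \<in> SL2Z" "act (Nq q, tq q, 1) g = (C1,-B1,A)"
        using less.hyps[OF _ C1p d2] by blast
      define D where "D = mmul (0,1,-1,0) (1,0,k,1)"
      have DS: "D \<in> SL2Z" unfolding D_def using mmul_SL[OF SS TS] .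
      have AD: "act (A,B,C) D = (C1,-B1,A)" unfolding D_def using act_comp[of "(A,B,C)"] T S by metis
      have "act (Nq q, tq q, 1) (mmul (minv D) g) = (A,B,C)"
        by (metis act_comp g(2) AD minv_mul[OF DS] act_id)
      moreover have "mmul (minv D) g \<in> SL2Z" using mmul_SL minv_SL DS g(1) by blast
      ultimately show ?thesis by blast
    next
      case False
      have "\<bar>B1\<bar> \<le> A" using B1 r A2 by simp
      then show ?thesis using reduced_impossible[OF q A2 _ _ d1] False by simp
    qed
  qed
qed



lemma poly_circle:
  fixes l Q N t A B C n :: real
  assumes "l\<^sup>2 = Q/4" "Q = 4*N - t\<^sup>2" "B\<^sup>2 - 4*A*C = -Q" "2*n = 2*N*C + 2*A - t*B"
  shows "(l*(B - t*C))\<^sup>2 + (n - Q/2*C)\<^sup>2 = n\<^sup>2 - 4*l^4"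
proof -
  have "l^4 = (l\<^sup>2)\<^sup>2" by simp
  then show ?thesis using assms apply (simp add: field_simps power2_eq_square) by algebra
qed

lemma poly_back:
  fixes l Q X Y x y n m :: real
  assumes "l\<^sup>2 = Q/4" "l > 0" "x = l*X" "y = n + 2*l\<^sup>2*Y" "x\<^sup>2 + y\<^sup>2 = n\<^sup>2 - 4*l^4" "2*n = m"
  shows "X\<^sup>2 + 2*m*Y + Q*Y\<^sup>2 + Q = 0"
proof -
  have "l^4 = (l\<^sup>2)\<^sup>2" by simp
  then have "l\<^sup>2 * (X\<^sup>2 + 2*m*Y + Q*Y\<^sup>2 + Q) = 0" using assms
    apply (simp add: field_simps power2_eq_square) by algebra
  then show ?thesis using assms(2) by simp
qed

lemma f_disc: "q \<in> admissible_q \<Longrightarrow> (tq q)\<^sup>2 - 4*(Nq q)*1 = - int q"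
  using adm_param(4) by simp

lemma m_parity:
  assumes q: "q \<in> admissible_q" and g: "g \<in> SL2Z" and F: "act (Nq q, tq q, 1) g = (A,B,C)"
  shows "even (2*Nq q*C + 2*A - tq q*B - tq q)"
proof -
  define t where "t = tq q"
  have d: "B\<^sup>2 - 4*A*C = - int q" using disc_act[OF g F] f_disc[OF q] by simp
  have qq: "int q = 4*Nq q - t\<^sup>2" using adm_param(4)[OF q] by (simp add: t_def)
  have t01: "t = 0 \<or> t = 1" using adm_param(5)[OF q] by (simp add: t_def)
  have e1: "(B-t)*(B+t) = 4*(A*C - Nq q)" using d qq by (simp add: algebra_simps power2_eq_square)
  have "even ((B-t)*(B+t))" unfolding e1 by simp
  then have "even (B-t) \<or> even (B+t)" by simp
  moreover have "B + t = (B - t) + 2*t" by simp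
  ultimately have ev: "even (B+t)" by (metis even_add even_mult_iff even_numeral)
  have "2*Nq q*C + 2*A - t*B - t = 2*(Nq q*C + A) - t*(B+t) + (t\<^sup>2 - t)" by (simp add: algebra_simps power2_eq_square)
  moreover have "t\<^sup>2 - t = 0" using t01 by auto
  ultimately show ?thesis using ev unfolding t_def[symmetric] by simp
qed



lemma L_sub:
  assumes q: "q \<in> admissible_q" and g: "g \<in> Gamma_n q n"
  shows "(x_g q g, y_g q g) \<in> calL_n q n"
proof -
  obtain a b c d where gd: "g = (a,b,c,d)" by (metis prod_cases4)
  obtain A B C where F: "act (Nq q, tq q, 1) (a,b,c,d) = (A,B,C)" by (metis prod_cases3)
  have gS: "(a,b,c,d) \<in> SL2Z" and Rn: "RR q (a,b,c,d) = n" using g gd by (auto simp: Gamma_n_def)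
  note R = RR_act[OF q gS F]
  define l where "l = lam_q q"
  define t where "t = tq q"
  define N where "N = Nq q"
  have l2: "l\<^sup>2 = real q/4" and l0: "l > 0" using adm_param[OF q] by (simp_all add: l_def)
  have qq: "real q = 4*real_of_int N - (real_of_int t)\<^sup>2"
  proof -
    have "real_of_int (int q) = real_of_int (4*N - t\<^sup>2)" using adm_param(4)[OF q] by (simp add: N_def t_def)
    then show ?thesis by simp
  qed
  have dI: "B\<^sup>2 - 4*A*C = - int q" using disc_act[OF gS F] f_disc[OF q] by simp
  have dR: "(real_of_int B)\<^sup>2 - 4*real_of_int A*real_of_int C = - real q"
  proof -
    have "real_of_int (B\<^sup>2 - 4*A*C) = real_of_int (- int q)" using dI by simp
    then show ?thesis by simp
  qed
  have n2: "2*n = 2*real_of_int N*real_of_int C + 2*real_of_int A - real_of_int t*real_of_int B" using R(1) Rn by (simp add: N_def t_def)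
  have x: "x_g q g = l*(real_of_int B - real_of_int t*real_of_int C)" using R(3) gd by (simp add: l_def t_def)
  have y: "y_g q g = n - real q/2*real_of_int C" using R(4) gd Rn by simp
  have circ: "(x_g q g)\<^sup>2 + (y_g q g)\<^sup>2 = n\<^sup>2 - 4*l^4"
    unfolding x y by (rule poly_circle[OF l2 qq dR n2])
  have c1: "(y_g q g - n) / (2*l\<^sup>2) = of_int (-C)" unfolding y l2 using adm_param(7)[OF q] by simp
  have c2: "x_g q g / l = of_int (B - t*C)" unfolding x using l0 by simp
  show ?thesis unfolding calL_n_def using circ c1 c2 by (simp add: l_def)
qed



lemma calL_sub:
  assumes q: "q \<in> admissible_q" and g0: "g0 \<in> SL2Z" and n: "n = RR q g0"
    and xy: "(x,y) \<in> calL_n q n"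
  shows "(x,y) \<in> L_n q n"
proof -
  define l where "l = lam_q q"
  define t where "t = tq q"
  define N where "N = Nq q"
  have l2: "l\<^sup>2 = real q/4" and l0: "l > 0" and q0: "q > 0" using adm_param[OF q] by (simp_all add: l_def)
  have qqI: "int q = 4*N - t\<^sup>2" using adm_param(4)[OF q] by (simp add: N_def t_def)
  have t01: "t = 0 \<or> t = 1" using adm_param(5)[OF q] by (simp add: t_def)
  have todd: "odd q \<longleftrightarrow> t = 1" using adm_param(6)[OF q] by (simp add: t_def)
  obtain a0 b0 c0 d0 where g0d: "g0 = (a0,b0,c0,d0)" by (metis prod_cases4)
  obtain A0 B0 C0 where F0: "act (Nq q, tq q, 1) (a0,b0,c0,d0) = (A0,B0,C0)" by (metis prod_cases3)
  define m where "m = 2*N*C0 + 2*A0 - t*B0"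
  have gS0: "(a0,b0,c0,d0) \<in> SL2Z" using g0 g0d by simp
  note R0 = RR_act[OF q gS0 F0]
  have nm: "2*n = real_of_int m" using R0(1) n g0d by (simp add: m_def N_def t_def)
  have m0: "m > 0"
  proof -
    have "real_of_int m > 0" using R0(2) n g0d nm by simp
    then show ?thesis by simp
  qed
  have mpar: "even (m - t)" using m_parity[OF q gS0 F0] by (simp add: m_def N_def t_def)
  have circ: "x\<^sup>2 + y\<^sup>2 = n\<^sup>2 - 4*l^4" and cy: "(y - n) / (2*l\<^sup>2) \<in> \<int>" and cx: "x / l \<in> \<int>"
    using xy by (simp_all add: calL_n_def l_def)
  obtain X where X: "x / l = of_int X" using cx by (metis Ints_cases)
  obtain Y where Y: "(y - n) / (2*l\<^sup>2) = of_int Y" using cy by (metis Ints_cases)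
  have xX: "x = l * of_int X" using X l0 by (simp add: field_simps)
  have yY: "y = n + 2*l\<^sup>2*of_int Y" using Y l0 by (simp add: field_simps)
  have eR: "(real_of_int X)\<^sup>2 + 2*real_of_int m*real_of_int Y + real q*(real_of_int Y)\<^sup>2 + real q = 0"
    by (rule poly_back[OF l2 l0 xX yY circ nm])
  have eI: "X\<^sup>2 + 2*m*Y + int q*Y\<^sup>2 + int q = 0"
  proof -
    have "real_of_int (X\<^sup>2 + 2*m*Y + int q*Y\<^sup>2 + int q) = 0" using eR by simp
    then show ?thesis by linarith
  qed
  have Yneg: "Y < 0"
  proof (rule ccontr)
    assume "\<not> Y < 0"
    then have "0 \<le> m*Y" using m0 by simp
    moreover have "0 \<le> X\<^sup>2" "0 \<le> int q*Y\<^sup>2" by simp_all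
    ultimately show False using eI q0 by linarith
  qed
  define C1 where "C1 = -Y"
  define B1 where "B1 = X + t*C1"
  define E where "E = m + t*X + (t\<^sup>2 - 2*N)*C1"
  have evE: "even E"
  proof (cases "t = 0")
    case True
    then show ?thesis using mpar by (simp add: E_def)
  next
    case False
    then have t1: "t = 1" using t01 by simp
    then have oq: "odd (int q)" using todd by simp
    have "even (X\<^sup>2 + 2*m*Y + int q*Y\<^sup>2 + int q)" using eI by simp
    then have "even (X + Y + 1)" using oq by simp
    moreover have "odd m" using mpar t1 by simp
    ultimately show ?thesis unfolding E_def C1_def t1 by simp
  qed
  then obtain A1 where A1: "E = 2*A1" by (metis dvd_def)
  have d1: "B1\<^sup>2 - 4*A1*C1 = - int q"
  proof -
    have "B1\<^sup>2 - 4*A1*C1 = B1\<^sup>2 - 2*E*C1" using A1 by simp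
    also have "\<dots> = X\<^sup>2 + 2*m*Y + (4*N - t\<^sup>2)*Y\<^sup>2"
      by (simp add: B1_def E_def C1_def algebra_simps power2_eq_square)
    also have "\<dots> = - int q" using eI qqI by simp
    finally show ?thesis .
  qed
  have C1p: "C1 > 0" using Yneg by (simp add: C1_def)
  have "0 \<le> B1\<^sup>2" by simp
  then have "0 < 4*A1*C1" using d1 q0 by linarith
  then have A1p: "A1 > 0" using C1p by (smt (verit) mult_nonneg_nonneg mult_pos_pos zero_less_mult_iff)
  obtain g where gS: "g \<in> SL2Z" and gF: "act (Nq q, tq q, 1) g = (A1,B1,C1)"
    using classno[OF q A1p d1] by blast
  obtain a b c d where gd: "g = (a,b,c,d)" by (metis prod_cases4)
  note R = RR_act[OF q gS[unfolded gd] gF[unfolded gd]]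
  have mm: "2*N*C1 + 2*A1 - t*B1 = m" using A1[symmetric]
    by (simp add: E_def B1_def algebra_simps power2_eq_square)
  have Rg: "RR q g = n"
  proof -
    have "RR q g = real_of_int (2*N*C1 + 2*A1 - t*B1) / 2" using R(1) gd by (simp add: N_def t_def)
    then show ?thesis using mm nm by simp
  qed
  have xg: "x_g q g = x"
  proof -
    have "B1 - t*C1 = X" by (simp add: B1_def)
    then show ?thesis using R(3) gd xX by (simp add: l_def t_def)
  qed
  have yg: "y_g q g = y"
    using R(4) gd Rg yY l2 by (simp add: C1_def)
  have "g \<in> Gamma_n q n" using gS Rg by (simp add: Gamma_n_def)
  then show ?thesis unfolding L_n_def using xg yg by force
qed



definition tT :: "nat \<Rightarrow> int \<Rightarrow> (int\<times>int) set" where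
  "tT q m = {(a,b). (2*a + tq q*b)\<^sup>2 + int q*b\<^sup>2 = m\<^sup>2 - (int q)\<^sup>2}"
definition pP :: "nat \<Rightarrow> int \<Rightarrow> (int\<times>int) set" where
  "pP q m = {(a,b) \<in> tT q m. int q dvd (2*a + tq q*b - m)}"
definition hh :: "nat \<Rightarrow> real \<Rightarrow> int \<Rightarrow> int\<times>int \<Rightarrow> real\<times>real" where
  "hh q n m p = (case p of (a,b) \<Rightarrow> (lam_q q * of_int b, n + 2*(lam_q q)\<^sup>2 * of_int ((2*a + tq q*b - m) div int q)))"

lemma poly_fwd:
  fixes l Q X Y x y n m :: real
  assumes "l\<^sup>2 = Q/4" "x = l*X" "y = n + 2*l\<^sup>2*Y" "X\<^sup>2 + 2*m*Y + Q*Y\<^sup>2 + Q = 0" "2*n = m"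
  shows "x\<^sup>2 + y\<^sup>2 = n\<^sup>2 - 4*l^4"
proof -
  have "l^4 = (l\<^sup>2)\<^sup>2" by simp
  have "x\<^sup>2 + y\<^sup>2 - (n\<^sup>2 - 4*l^4) = l\<^sup>2 * (X\<^sup>2 + 2*m*Y + Q*Y\<^sup>2 + Q)"
    using assms(1,2,3,5) \<open>l^4 = (l\<^sup>2)\<^sup>2\<close> by (simp add: field_simps power2_eq_square)
  then show ?thesis using assms(4) by simp
qed

lemma calL_char:
  assumes q: "q \<in> admissible_q" and nm: "2*n = real_of_int m"
  shows "(x,y) \<in> calL_n q n \<longleftrightarrow> (\<exists>X Y. x = lam_q q * of_int X \<and> y = n + 2*(lam_q q)\<^sup>2 * of_int Y
           \<and> X\<^sup>2 + 2*m*Y + int q*Y\<^sup>2 + int q = 0)"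
proof -
  define l where "l = lam_q q"
  have l2: "l\<^sup>2 = real q/4" and l0: "l > 0" and q0: "q > 0" using adm_param[OF q] by (simp_all add: l_def)
  show ?thesis
  proof
    assume xy: "(x,y) \<in> calL_n q n"
    have circ: "x\<^sup>2 + y\<^sup>2 = n\<^sup>2 - 4*l^4" and cy: "(y - n) / (2*l\<^sup>2) \<in> \<int>" and cx: "x / l \<in> \<int>"
      using xy by (simp_all add: calL_n_def l_def)
    obtain X where X: "x / l = of_int X" using cx by (metis Ints_cases)
    obtain Y where Y: "(y - n) / (2*l\<^sup>2) = of_int Y" using cy by (metis Ints_cases)
    have xX: "x = l * of_int X" using X l0 by (simp add: field_simps)
    have yY: "y = n + 2*l\<^sup>2*of_int Y" using Y l0 by (simp add: field_simps)
    have eR: "(real_of_int X)\<^sup>2 + 2*real_of_int m*real_of_int Y + real q*(real_of_int Y)\<^sup>2 + real q = 0"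
      by (rule poly_back[OF l2 l0 xX yY circ nm])
    have eI: "X\<^sup>2 + 2*m*Y + int q*Y\<^sup>2 + int q = 0"
    proof -
      have "real_of_int (X\<^sup>2 + 2*m*Y + int q*Y\<^sup>2 + int q) = 0" using eR by simp
      then show ?thesis by linarith
    qed
    show "\<exists>X Y. x = lam_q q * of_int X \<and> y = n + 2*(lam_q q)\<^sup>2 * of_int Y
           \<and> X\<^sup>2 + 2*m*Y + int q*Y\<^sup>2 + int q = 0"
      using xX yY eI unfolding l_def by blast
  next
    assume "\<exists>X Y. x = lam_q q * of_int X \<and> y = n + 2*(lam_q q)\<^sup>2 * of_int Y
           \<and> X\<^sup>2 + 2*m*Y + int q*Y\<^sup>2 + int q = 0"
    then obtain X Y where xX: "x = l * of_int X" and yY: "y = n + 2*l\<^sup>2*of_int Y"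
      and eI: "X\<^sup>2 + 2*m*Y + int q*Y\<^sup>2 + int q = 0" unfolding l_def by blast
    have eR: "(real_of_int X)\<^sup>2 + 2*real_of_int m*real_of_int Y + real q*(real_of_int Y)\<^sup>2 + real q = 0"
    proof -
      have "real_of_int (X\<^sup>2 + 2*m*Y + int q*Y\<^sup>2 + int q) = 0" using eI by simp
      then show ?thesis by simp
    qed
    have circ: "x\<^sup>2 + y\<^sup>2 = n\<^sup>2 - 4*l^4" by (rule poly_fwd[OF l2 xX yY eR nm])
    have c1: "(y - n) / (2*l\<^sup>2) = of_int Y" using yY l0 by simp
    have c2: "x / l = of_int X" using xX l0 by simp
    show "(x,y) \<in> calL_n q n" unfolding calL_n_def using circ c1 c2 by (simp add: l_def)
  qed
qed



lemma calL_eq: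
  assumes q: "q \<in> admissible_q" and nm: "2*n = real_of_int m" and mpar: "even (m - tq q)"
  shows "calL_n q n = hh q n m ` pP q m" "inj_on (hh q n m) (pP q m)"
proof -
  define l where "l = lam_q q"
  define t where "t = tq q"
  define N where "N = Nq q"
  have l0: "l > 0" and q0: "q > 0" using adm_param[OF q] by (simp_all add: l_def)
  have qqI: "int q = 4*N - t\<^sup>2" using adm_param(4)[OF q] by (simp add: N_def t_def)
  have t01: "t = 0 \<or> t = 1" using adm_param(5)[OF q] by (simp add: t_def)
  have todd: "odd q \<longleftrightarrow> t = 1" using adm_param(6)[OF q] by (simp add: t_def)
  have mpar': "even (m - t)" using mpar by (simp add: t_def)
  have hdef: "hh q n m (a,b) = (l * of_int b, n + 2*l\<^sup>2 * of_int ((2*a + t*b - m) div int q))" for a b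
    by (simp add: hh_def l_def t_def)
  show "calL_n q n = hh q n m ` pP q m"
  proof (rule set_eqI)
    fix p :: "real\<times>real"
    obtain x y where p: "p = (x,y)" by (metis prod.exhaust)
    show "p \<in> calL_n q n \<longleftrightarrow> p \<in> hh q n m ` pP q m"
    proof
      assume "p \<in> calL_n q n"
      then obtain X Y where xX: "x = l * of_int X" and yY: "y = n + 2*l\<^sup>2 * of_int Y"
        and eI: "X\<^sup>2 + 2*m*Y + int q*Y\<^sup>2 + int q = 0"
        using calL_char[OF q nm] p unfolding l_def by blast
      have ev: "even (m + int q*Y - t*X)"
      proof (cases "t = 0")
        case True
        then show ?thesis using mpar' qqI by simp
      next
        case False
        then have t1: "t = 1" using t01 by simp
        then have oq: "odd (int q)" using todd by simp
        have "even (X\<^sup>2 + 2*m*Y + int q*Y\<^sup>2 + int q)" using eI by simp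
        then have "even (X + Y + 1)" using oq by simp
        moreover have "odd m" using mpar' t1 by simp
        ultimately show ?thesis unfolding t1 using oq by simp
      qed
      then obtain a where a: "m + int q*Y - t*X = 2*a" by (metis dvd_def)
      have u: "2*a + t*X - m = int q * Y" using a by simp
      have inT: "(a,X) \<in> tT q m"
      proof -
        have "(2*a + t*X)\<^sup>2 + int q*X\<^sup>2 = (m + int q*Y)\<^sup>2 + int q*X\<^sup>2" using u by (simp add: algebra_simps)
        also have "\<dots> = m\<^sup>2 + int q * (X\<^sup>2 + 2*m*Y + int q*Y\<^sup>2)" by (simp add: algebra_simps power2_eq_square)
        also have "\<dots> = m\<^sup>2 + int q * (- int q)" using eI by (metis add.commute add_eq_0_iff add.left_commute add.assoc)
        also have "\<dots> = m\<^sup>2 - (int q)\<^sup>2" by (simp add: power2_eq_square)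
        finally show ?thesis by (simp add: tT_def t_def)
      qed
      have inP: "(a,X) \<in> pP q m" using inT u by (simp add: pP_def t_def)
      have "hh q n m (a,X) = (x,y)" unfolding hdef u using q0 xX yY by simp
      then show "p \<in> hh q n m ` pP q m" using inP p by force
    next
      assume "p \<in> hh q n m ` pP q m"
      then obtain a b where ab: "(a,b) \<in> pP q m" and hp: "p = hh q n m (a,b)" by auto
      from ab obtain Y where Y: "2*a + t*b - m = int q * Y" and T: "(2*a + t*b)\<^sup>2 + int q*b\<^sup>2 = m\<^sup>2 - (int q)\<^sup>2"
        by (auto simp: pP_def tT_def t_def elim!: dvdE)
      have "int q * (b\<^sup>2 + 2*m*Y + int q*Y\<^sup>2 + int q) = (2*a + t*b)\<^sup>2 + int q*b\<^sup>2 - m\<^sup>2 + (int q)\<^sup>2"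
        using Y by (simp add: algebra_simps power2_eq_square)
      then have "int q * (b\<^sup>2 + 2*m*Y + int q*Y\<^sup>2 + int q) = 0" using T by simp
      then have eI: "b\<^sup>2 + 2*m*Y + int q*Y\<^sup>2 + int q = 0" using q0 by simp
      have "hh q n m (a,b) = (l * of_int b, n + 2*l\<^sup>2 * of_int Y)" unfolding hdef Y using q0 by simp
      then show "p \<in> calL_n q n" using calL_char[OF q nm] hp eI unfolding l_def by auto
    qed
  qed
  show "inj_on (hh q n m) (pP q m)"
  proof (rule inj_onI)
    fix p1 p2 assume p1: "p1 \<in> pP q m" and p2: "p2 \<in> pP q m" and e: "hh q n m p1 = hh q n m p2"
    obtain a1 b1 where a1: "p1 = (a1,b1)" by (metis prod.exhaust)
    obtain a2 b2 where a2: "p2 = (a2,b2)" by (metis prod.exhaust)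
    from p1 a1 obtain Y1 where Y1: "2*a1 + t*b1 - m = int q * Y1" by (auto simp: pP_def t_def elim!: dvdE)
    from p2 a2 obtain Y2 where Y2: "2*a2 + t*b2 - m = int q * Y2" by (auto simp: pP_def t_def elim!: dvdE)
    have "l * of_int b1 = l * of_int b2" and "n + 2*l\<^sup>2 * of_int Y1 = n + 2*l\<^sup>2 * of_int Y2"
      using e q0 unfolding a1 a2 hdef Y1 Y2 by simp_all
    then have "b1 = b2" "Y1 = Y2" using l0 by simp_all
    then have "a1 = a2" using Y1 Y2 by simp
    then show "p1 = p2" using a1 a2 \<open>b1 = b2\<close> by simp
  qed
qed



lemma tT_finite: assumes q0: "q > 0" shows "finite (tT q m)"
proof -
  have "tT q m \<subseteq> {-\<bar>m\<bar>..\<bar>m\<bar>} \<times> {-\<bar>m\<bar>..\<bar>m\<bar>}"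
  proof
    fix p assume "p \<in> tT q m"
    then obtain a b where p: "p = (a,b)" and e: "(2*a + tq q*b)\<^sup>2 + int q*b\<^sup>2 = m\<^sup>2 - (int q)\<^sup>2"
      by (auto simp: tT_def)
    have q2: "0 \<le> (int q)\<^sup>2" "0 \<le> (2*a + tq q*b)\<^sup>2" by simp_all
    have "int q*b\<^sup>2 \<le> m\<^sup>2" using e q2 by linarith
    moreover have "b\<^sup>2 \<le> int q*b\<^sup>2"
    proof -
      have "1 \<le> int q" using q0 by simp
      then have "1*b\<^sup>2 \<le> int q*b\<^sup>2" by (intro mult_right_mono) simp_all
      then show ?thesis by simp
    qed
    ultimately have "b\<^sup>2 \<le> m\<^sup>2" by auto
    then have bb: "\<bar>b\<bar> \<le> \<bar>m\<bar>" using abs_le_square_iff by blast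
    have "0 \<le> int q*b\<^sup>2" by simp
    then have "(2*a + tq q*b)\<^sup>2 \<le> m\<^sup>2" using e q2 by linarith
    then have "\<bar>2*a + tq q*b\<bar> \<le> \<bar>m\<bar>" using abs_le_square_iff by blast
    moreover have "\<bar>tq q*b\<bar> \<le> \<bar>m\<bar>"
    proof (cases "tq q = 0")
      case True then show ?thesis by simp
    next
      case False
      then have "tq q = 1" by (simp add: tq_def split: if_splits)
      then show ?thesis using bb by simp
    qed
    ultimately have "\<bar>a\<bar> \<le> \<bar>m\<bar>" by linarith
    then show "p \<in> {-\<bar>m\<bar>..\<bar>m\<bar>} \<times> {-\<bar>m\<bar>..\<bar>m\<bar>}" using bb p by auto
  qed
  then show ?thesis by (rule finite_subset) simp
qed

lemma rK_eq:
  assumes q: "q \<in> admissible_q" and nm: "2*n = real_of_int m"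
  shows "r_K q (n\<^sup>2 - 4*(lam_q q)^4) = card (tT q m)"
proof -
  define l where "l = lam_q q"
  define t where "t = tq q"
  have l2: "l\<^sup>2 = real q/4" and l0: "l > 0" and q0: "q > 0" using adm_param[OF q] by (simp_all add: l_def)
  have z: "z_q q = Complex (of_int t / 2) l" using adm_param(1)[OF q] by (simp add: z_q_def l_def t_def)
  define k where "k p = (case p of (a,b) \<Rightarrow> of_int a + of_int b * z_q q)" for p :: "int\<times>int"
  have cm: "(cmod (k (a,b)))\<^sup>2 = n\<^sup>2 - 4*l^4 \<longleftrightarrow> (a,b) \<in> tT q m" for a b
  proof -
    have l4: "l^4 = (l\<^sup>2)\<^sup>2" by simp
    have "(cmod (k (a,b)))\<^sup>2 = (of_int a + of_int b * of_int t/2)\<^sup>2 + (of_int b * l)\<^sup>2"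
      by (simp add: k_def z cmod_power2)
    also have "\<dots> = real_of_int ((2*a + t*b)\<^sup>2 + int q*b\<^sup>2) / 4"
      using l2 by (simp add: power2_eq_square field_simps)
    finally have e1: "(cmod (k (a,b)))\<^sup>2 = real_of_int ((2*a + t*b)\<^sup>2 + int q*b\<^sup>2) / 4" .
    have e2: "n\<^sup>2 - 4*l^4 = real_of_int (m\<^sup>2 - (int q)\<^sup>2) / 4"
    proof -
      have nn: "n = real_of_int m / 2" using nm by simp
      show ?thesis unfolding l4 l2 nn by (simp add: power2_eq_square field_simps)
    qed
    show ?thesis unfolding e1 e2 tT_def t_def by (simp only: mem_Collect_eq prod.case) (metis divide_cancel_right of_int_eq_iff zero_neq_numeral)
  qed
  have S: "{\<alpha> \<in> O_K q. (cmod \<alpha>)\<^sup>2 = n\<^sup>2 - 4*l^4} = k ` tT q m"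
  proof
    show "{\<alpha> \<in> O_K q. (cmod \<alpha>)\<^sup>2 = n\<^sup>2 - 4*l^4} \<subseteq> k ` tT q m"
    proof
      fix \<alpha> assume "\<alpha> \<in> {\<alpha> \<in> O_K q. (cmod \<alpha>)\<^sup>2 = n\<^sup>2 - 4*l^4}"
      then obtain a b where "\<alpha> = k (a,b)" "(cmod \<alpha>)\<^sup>2 = n\<^sup>2 - 4*l^4"
        by (auto simp: O_K_def k_def)
      then show "\<alpha> \<in> k ` tT q m" using cm by blast
    qed
    show "k ` tT q m \<subseteq> {\<alpha> \<in> O_K q. (cmod \<alpha>)\<^sup>2 = n\<^sup>2 - 4*l^4}"
    proof
      fix \<alpha> assume "\<alpha> \<in> k ` tT q m"
      then obtain a b where ab: "(a,b) \<in> tT q m" "\<alpha> = k (a,b)" by auto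
      then have "\<alpha> \<in> O_K q" by (auto simp: O_K_def k_def)
      then show "\<alpha> \<in> {\<alpha> \<in> O_K q. (cmod \<alpha>)\<^sup>2 = n\<^sup>2 - 4*l^4}" using cm ab by blast
    qed
  qed
  have inj: "inj_on k (tT q m)"
  proof (rule inj_onI)
    fix p1 p2 assume "p1 \<in> tT q m" "p2 \<in> tT q m" "k p1 = k p2"
    obtain a1 b1 where a1: "p1 = (a1,b1)" by (metis prod.exhaust)
    obtain a2 b2 where a2: "p2 = (a2,b2)" by (metis prod.exhaust)
    have "Im (k p1) = Im (k p2)" "Re (k p1) = Re (k p2)" using \<open>k p1 = k p2\<close> by simp_all
    then have "of_int b1 * l = of_int b2 * l" "real_of_int a1 + of_int b1 * of_int t / 2 = real_of_int a2 + of_int b2 * of_int t / 2"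
      unfolding a1 a2 by (simp_all add: k_def z)
    then have "b1 = b2" "a1 = a2" using l0 by simp_all
    then show "p1 = p2" using a1 a2 by simp
  qed
  show ?thesis unfolding r_K_def l_def[symmetric] S using card_image[OF inj] by simp
qed



lemma invol_card:
  assumes fin: "finite T" and PT: "P \<subseteq> T" and s1: "\<forall>x\<in>P. s x \<in> T - P"
    and s2: "\<forall>x\<in>T - P. s x \<in> P" and ss: "\<forall>x\<in>T. s (s x) = x"
  shows "card T = 2 * card P"
proof -
  have "bij_betw s P (T - P)"
    by (rule bij_betw_byWitness[where f'=s]) (use PT s1 s2 ss in auto)
  then have "card (T - P) = card P" by (simp add: bij_betw_same_card)
  moreover have "card T = card P + card (T - P)"
    using fin PT by (metis card_Diff_subset card_mono finite_subset le_add_diff_inverse)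
  ultimately show ?thesis by simp
qed

lemma odd_q_prime: "q \<in> admissible_q \<Longrightarrow> odd q \<Longrightarrow> prime (int q)"
proof -
  assume q: "q \<in> admissible_q" and o: "odd q"
  have p: "prime (3::nat)" "prime (7::nat)" "prime (11::nat)" "prime (19::nat)" "prime (43::nat)"
    "prime (67::nat)" "prime (163::nat)"
    by (unfold prime_nat_iff' set_upt[symmetric]; simp add: upt_rec_numeral)+
  show ?thesis using adm_cases[OF q] o p by auto
qed

lemma count_odd:
  assumes q: "q \<in> admissible_q" and o: "odd q"
  shows "(int q dvd m \<longrightarrow> pP q m = tT q m) \<and> (\<not> int q dvd m \<longrightarrow> card (tT q m) = 2 * card (pP q m))"
proof -
  have pr: "prime (int q)" using odd_q_prime[OF q o] .
  have t1: "tq q = 1" using adm_param(6)[OF q] o by simp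
  have q0: "q > 0" using adm_param(7)[OF q] .
  have key: "int q dvd (2*a + b - m) * (2*a + b + m)" if "(a,b) \<in> tT q m" for a b
  proof -
    have "(2*a + b)\<^sup>2 + int q*b\<^sup>2 = m\<^sup>2 - (int q)\<^sup>2" using that t1 by (simp add: tT_def)
    then have "(2*a + b - m) * (2*a + b + m) = int q * (- b\<^sup>2 - int q)"
      by (simp add: algebra_simps power2_eq_square)
    then show ?thesis by simp
  qed
  have n2: "\<not> int q dvd 2"
  proof
    assume "int q dvd 2"
    then have "q dvd 2" by presburger
    then have "q \<le> 2" by (simp add: dvd_imp_le)
    then show False using adm_cases[OF q] by auto
  qed
  show ?thesis
  proof (intro conjI impI)
    assume qm: "int q dvd m"
    show "pP q m = tT q m"
    proof (rule set_eqI)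
      fix p :: "int\<times>int"
      obtain a b where p: "p = (a,b)" by (metis prod.exhaust)
      show "p \<in> pP q m \<longleftrightarrow> p \<in> tT q m"
      proof
        assume "p \<in> tT q m"
        then have T: "(a,b) \<in> tT q m" using p by simp
        have "int q dvd (2*a + b - m) \<or> int q dvd (2*a + b + m)"
          using key[OF T] pr by (simp add: prime_dvd_mult_iff)
        then have "int q dvd (2*a + b - m)"
        proof
          assume "int q dvd (2*a + b + m)"
          moreover have "int q dvd 2*m" using qm by simp
          ultimately have "int q dvd (2*a + b + m) - 2*m" by (rule dvd_diff)
          then show ?thesis by (simp add: algebra_simps)
        qed
        then show "p \<in> pP q m" using T p t1 by (simp add: pP_def)
      qed (simp add: pP_def p)
    qed
  next
    assume qm: "\<not> int q dvd m"
    define s where "s p = (case p of (a,b) \<Rightarrow> (-a - b, b))" for p :: "int\<times>int"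
    have sT: "s (a,b) \<in> tT q m" if "(a,b) \<in> tT q m" for a b
      using that t1 by (simp add: s_def tT_def power2_eq_square algebra_simps)
    show "card (tT q m) = 2 * card (pP q m)"
    proof (rule invol_card[where s=s])
      show "finite (tT q m)" using tT_finite[OF q0] .
      show "pP q m \<subseteq> tT q m" by (auto simp: pP_def)
      show "\<forall>x\<in>tT q m. s (s x) = x" by (auto simp: s_def)
      show "\<forall>x\<in>pP q m. s x \<in> tT q m - pP q m"
      proof
        fix x assume x: "x \<in> pP q m"
        obtain a b where p: "x = (a,b)" by (metis prod.exhaust)
        have T: "(a,b) \<in> tT q m" and d: "int q dvd 2*a + b - m" using x p t1 by (auto simp: pP_def)
        have "\<not> int q dvd (2*(-a-b) + b - m)"
        proof
          assume "int q dvd (2*(-a-b) + b - m)"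
          then have "int q dvd (2*(-a-b) + b - m) + (2*a + b - m)" using d by (rule dvd_add)
          moreover have "(2*(-a-b) + b - m) + (2*a + b - m) = 2 * (-m)" by simp
          ultimately have "int q dvd 2 * (-m)" by simp
          then show False using pr n2 qm by (simp add: prime_dvd_mult_iff)
        qed
        then show "s x \<in> tT q m - pP q m" using sT[OF T] p t1 by (simp add: s_def pP_def)
      qed
      show "\<forall>x\<in>tT q m - pP q m. s x \<in> pP q m"
      proof
        fix x assume x: "x \<in> tT q m - pP q m"
        obtain a b where p: "x = (a,b)" by (metis prod.exhaust)
        have T: "(a,b) \<in> tT q m" and d: "\<not> int q dvd 2*a + b - m" using x p t1 by (auto simp: pP_def)
        have "int q dvd (2*a + b + m)"
          using key[OF T] pr d by (simp add: prime_dvd_mult_iff)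
        then have "int q dvd - (2*a + b + m)" by (simp only: dvd_minus_iff)
        moreover have "- (2*a + b + m) = 2*(-a-b) + b - m" by simp
        ultimately have "int q dvd (2*(-a-b) + b - m)" by metis
        then show "s x \<in> pP q m" using sT[OF T] p t1 by (simp add: s_def pP_def)
      qed
    qed
  qed
qed



lemma tq48: "tq 4 = 0" "tq 8 = 0" by (simp_all add: tq_def)

lemma no4dvd2: "(4::int) * w \<noteq> 2" by presburger

lemma count4:
  assumes me: "even m"
  shows "(4 dvd m \<longrightarrow> pP 4 m = tT 4 m) \<and> (\<not> 4 dvd m \<longrightarrow> card (tT 4 m) = 2 * card (pP 4 m))"
proof -
  obtain k where mk: "m = 2*k" using me by (metis dvd_def)
  have T: "(a,b) \<in> tT 4 m \<longleftrightarrow> a\<^sup>2 + b\<^sup>2 = k\<^sup>2 - 4" for a b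
  proof -
    have "(a,b) \<in> tT 4 m \<longleftrightarrow> 4*(a\<^sup>2 + b\<^sup>2) = 4*(k\<^sup>2 - 4)"
      by (simp add: tT_def tq48 mk power2_eq_square algebra_simps)
    then show ?thesis by (metis mult_cancel_left zero_neq_numeral)
  qed
  have P: "(a,b) \<in> pP 4 m \<longleftrightarrow> (a,b) \<in> tT 4 m \<and> even (a - k)" for a b
  proof -
    have "(4::int) dvd 2*a - 2*k \<longleftrightarrow> even (a - k)" by presburger
    then show ?thesis by (simp add: pP_def tq48 mk)
  qed
  show ?thesis
  proof (intro conjI impI)
    assume "4 dvd m"
    then have "even k" using mk by presburger
    then obtain h where kh: "k = 2*h" by (metis evenE)
    show "pP 4 m = tT 4 m"
    proof (rule set_eqI)
      fix p :: "int\<times>int"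
      obtain a b where p: "p = (a,b)" by (metis prod.exhaust)
      have "even a" if e: "a\<^sup>2 + b\<^sup>2 = k\<^sup>2 - 4"
      proof (rule ccontr)
        assume oa: "odd a"
        have "even (a\<^sup>2 + b\<^sup>2)" using e kh by simp
        then have ob: "odd b" using oa by simp
        obtain i where i: "a = 2*i+1" using oa by (metis oddE)
        obtain j where j: "b = 2*j+1" using ob by (metis oddE)
        have "4*(h\<^sup>2 - 1 - i\<^sup>2 - i - j\<^sup>2 - j) = 2" using e unfolding i j kh
          by (simp add: algebra_simps power2_eq_square)
        then show False using no4dvd2 by blast
      qed
      then show "p \<in> pP 4 m \<longleftrightarrow> p \<in> tT 4 m" using P T p kh by auto
    qed
  next
    assume n4: "\<not> 4 dvd m"
    then have ok: "odd k" using mk by presburger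
    define s where "s p = (case p of (a,b) \<Rightarrow> (b,a))" for p :: "int\<times>int"
    have par: "even a \<longleftrightarrow> odd b" if "(a,b) \<in> tT 4 m" for a b
    proof -
      have "odd (a\<^sup>2 + b\<^sup>2)" using that T ok by simp
      then show ?thesis by simp
    qed
    show "card (tT 4 m) = 2 * card (pP 4 m)"
    proof (rule invol_card[where s=s])
      show "finite (tT 4 m)" by (rule tT_finite) simp
      show "pP 4 m \<subseteq> tT 4 m" by (auto simp: pP_def)
      show "\<forall>x\<in>tT 4 m. s (s x) = x" by (auto simp: s_def)
      show "\<forall>x\<in>pP 4 m. s x \<in> tT 4 m - pP 4 m"
      proof
        fix x assume x: "x \<in> pP 4 m"
        obtain a b where p: "x = (a,b)" by (metis prod.exhaust)
        have Ta: "(a,b) \<in> tT 4 m" "even (a - k)" using x p P by auto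
        have Tb: "(b,a) \<in> tT 4 m" using Ta T by (simp add: algebra_simps)
        have "odd a" using Ta(2) ok by simp
        then have "even b" using par[OF Ta(1)] by simp
        then have "(b,a) \<notin> pP 4 m" using P ok by simp
        then show "s x \<in> tT 4 m - pP 4 m" using Tb p by (simp add: s_def)
      qed
      show "\<forall>x\<in>tT 4 m - pP 4 m. s x \<in> pP 4 m"
      proof
        fix x assume x: "x \<in> tT 4 m - pP 4 m"
        obtain a b where p: "x = (a,b)" by (metis prod.exhaust)
        have Ta: "(a,b) \<in> tT 4 m" "odd (a - k)" using x p P by auto
        have Tb: "(b,a) \<in> tT 4 m" using Ta T by (simp add: algebra_simps)
        have "even a" using Ta(2) ok by simp
        then have "odd b" using par[OF Ta(1)] by simp
        then have "(b,a) \<in> pP 4 m" using P ok Tb by simp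
        then show "s x \<in> pP 4 m" using p by (simp add: s_def)
      qed
    qed
  qed
qed

lemma count8:
  assumes me: "even m"
  shows "(4 dvd m \<longrightarrow> pP 8 m = tT 8 m) \<and> (\<not> 4 dvd m \<longrightarrow> card (tT 8 m) = 2 * card (pP 8 m))"
proof -
  obtain k where mk: "m = 2*k" using me by (metis dvd_def)
  have T: "(a,b) \<in> tT 8 m \<longleftrightarrow> a\<^sup>2 + 2*b\<^sup>2 = k\<^sup>2 - 16" for a b
  proof -
    have "(a,b) \<in> tT 8 m \<longleftrightarrow> 4*(a\<^sup>2 + 2*b\<^sup>2) = 4*(k\<^sup>2 - 16)"
      by (simp add: tT_def tq48 mk power2_eq_square algebra_simps)
    then show ?thesis by (metis mult_cancel_left zero_neq_numeral)
  qed
  have P: "(a,b) \<in> pP 8 m \<longleftrightarrow> (a,b) \<in> tT 8 m \<and> 4 dvd (a - k)" for a b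
  proof -
    have "(8::int) dvd 2*a - 2*k \<longleftrightarrow> 4 dvd (a - k)" by presburger
    then show ?thesis by (simp add: pP_def tq48 mk)
  qed
  show ?thesis
  proof (intro conjI impI)
    assume "4 dvd m"
    then have "even k" using mk by presburger
    then obtain h where kh: "k = 2*h" by (metis evenE)
    show "pP 8 m = tT 8 m"
    proof (rule set_eqI)
      fix p :: "int\<times>int"
      obtain a b where p: "p = (a,b)" by (metis prod.exhaust)
      have "4 dvd (a - k)" if e: "a\<^sup>2 + 2*b\<^sup>2 = k\<^sup>2 - 16"
      proof -
        have "even (a\<^sup>2 + 2*b\<^sup>2)" using e kh by simp
        then have "even a" by simp
        then obtain i where i: "a = 2*i" by (metis evenE)
        have e2: "b\<^sup>2 = 2*(h\<^sup>2 - 4 - i\<^sup>2)" using e unfolding i kh by (simp add: algebra_simps power2_eq_square)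
        then have "even (b\<^sup>2)" by simp
        then have "even b" by simp
        then obtain j where j: "b = 2*j" by (metis evenE)
        have e3: "i\<^sup>2 + 2*j\<^sup>2 = h\<^sup>2 - 4" using e unfolding i j kh by (simp add: algebra_simps power2_eq_square)
        then have "even (i\<^sup>2 + 2*j\<^sup>2) \<longleftrightarrow> even (h\<^sup>2 - 4)" by simp
        then have "even i \<longleftrightarrow> even h" by simp
        then have "even (i - h)" by simp
        then show ?thesis unfolding i kh by presburger
      qed
      then show "p \<in> pP 8 m \<longleftrightarrow> p \<in> tT 8 m" using P T p by auto
    qed
  next
    assume n4: "\<not> 4 dvd m"
    then have ok: "odd k" using mk by presburger
    define s where "s p = (case p of (a,b) \<Rightarrow> (-a,b))" for p :: "int\<times>int"
    have oa: "odd a" if "(a,b) \<in> tT 8 m" for a b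
    proof -
      have "odd (a\<^sup>2 + 2*b\<^sup>2)" using that T ok by simp
      then show ?thesis by simp
    qed
    have sT: "(-a,b) \<in> tT 8 m" if "(a,b) \<in> tT 8 m" for a b using that T by simp
    have sw: "4 dvd (a - k) \<longleftrightarrow> \<not> 4 dvd (-a - k)" if "odd a" for a
      using that ok by presburger
    show "card (tT 8 m) = 2 * card (pP 8 m)"
    proof (rule invol_card[where s=s])
      show "finite (tT 8 m)" by (rule tT_finite) simp
      show "pP 8 m \<subseteq> tT 8 m" by (auto simp: pP_def)
      show "\<forall>x\<in>tT 8 m. s (s x) = x" by (auto simp: s_def)
      show "\<forall>x\<in>pP 8 m. s x \<in> tT 8 m - pP 8 m"
      proof
        fix x assume x: "x \<in> pP 8 m"
        obtain a b where p: "x = (a,b)" by (metis prod.exhaust)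
        have Ta: "(a,b) \<in> tT 8 m" "4 dvd (a - k)" using x p P by auto
        then show "s x \<in> tT 8 m - pP 8 m" using sT[OF Ta(1)] sw[OF oa[OF Ta(1)]] P p by (simp add: s_def)
      qed
      show "\<forall>x\<in>tT 8 m - pP 8 m. s x \<in> pP 8 m"
      proof
        fix x assume x: "x \<in> tT 8 m - pP 8 m"
        obtain a b where p: "x = (a,b)" by (metis prod.exhaust)
        have Ta: "(a,b) \<in> tT 8 m" "\<not> 4 dvd (a - k)" using x p P by auto
        then show "s x \<in> pP 8 m" using sT[OF Ta(1)] sw[OF oa[OF Ta(1)]] P p by (simp add: s_def)
      qed
    qed
  qed
qed



lemma Ints_div_iff:
  fixes m k :: int
  assumes "k \<noteq> 0"
  shows "real_of_int m / real_of_int k \<in> \<int> \<longleftrightarrow> k dvd m"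
proof
  assume "real_of_int m / real_of_int k \<in> \<int>"
  then obtain j where j: "real_of_int m / real_of_int k = of_int j" by (metis Ints_cases)
  then have "real_of_int m = real_of_int (k*j)" using assms by (simp add: field_simps)
  then have "m = k*j" by (simp only: of_int_eq_iff)
  then show "k dvd m" by simp
next
  assume "k dvd m"
  then obtain j where "m = k*j" by (metis dvdE)
  then show "real_of_int m / real_of_int k \<in> \<int>" using assms by simp
qed

theorem proposition2p6:
  fixes q :: nat and n :: real
  assumes "q \<in> admissible_q"
    and "n \<in> N_z q"
  shows "L_n q n = calL_n q n \<and> finite (calL_n q n)
    \<and> real (card (calL_n q n)) = 2 * c_n q n * real (r_K q (n\<^sup>2 - 4 * (lam_q q)^4))"
proof -
  note q = assms(1)
  obtain g0 where g0: "g0 \<in> SL2Z" and n: "n = RR q g0" using assms(2) by (auto simp: N_z_def)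
  obtain a0 b0 c0 d0 where g0d: "g0 = (a0,b0,c0,d0)" by (metis prod_cases4)
  obtain A0 B0 C0 where F0: "act (Nq q, tq q, 1) (a0,b0,c0,d0) = (A0,B0,C0)" by (metis prod_cases3)
  define m where "m = 2*Nq q*C0 + 2*A0 - tq q*B0"
  have gS0: "(a0,b0,c0,d0) \<in> SL2Z" using g0 g0d by simp
  note R0 = RR_act[OF q gS0 F0]
  have nm: "2*n = real_of_int m" using R0(1) n g0d by (simp add: m_def)
  have mpar: "even (m - tq q)" using m_parity[OF q gS0 F0] by (simp add: m_def)
  have q0: "q > 0" using adm_param(7)[OF q] .
  have eq1: "L_n q n = calL_n q n"
  proof
    show "L_n q n \<subseteq> calL_n q n" unfolding L_n_def using L_sub[OF q] by blast
    show "calL_n q n \<subseteq> L_n q n" using calL_sub[OF q g0 n] by auto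
  qed
  note CE = calL_eq[OF q nm mpar]
  have finP: "finite (pP q m)" using tT_finite[OF q0] by (rule finite_subset[rotated]) (auto simp: pP_def)
  have fin: "finite (calL_n q n)" unfolding CE(1) using finP by simp
  have cardL: "card (calL_n q n) = card (pP q m)" unfolding CE(1) using card_image[OF CE(2)] .
  have rK: "r_K q (n\<^sup>2 - 4 * (lam_q q)^4) = card (tT q m)" using rK_eq[OF q nm] .
  have n2: "n / 2 = real_of_int m / real_of_int 4" using nm by simp
  have nq: "2 * n / real q = real_of_int m / real_of_int (int q)" using nm by simp
  have full_iff: "((even q \<and> n / 2 \<in> \<int>) \<or> (odd q \<and> 2 * n / real q \<in> \<int>)) \<longleftrightarrow>
      ((even q \<and> 4 dvd m) \<or> (odd q \<and> int q dvd m))"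
    unfolding n2 nq using Ints_div_iff[of 4 m] Ints_div_iff[of "int q" m] q0 by auto
  have cnt: "(((even q \<and> 4 dvd m) \<or> (odd q \<and> int q dvd m)) \<longrightarrow> pP q m = tT q m) \<and>
     (\<not> ((even q \<and> 4 dvd m) \<or> (odd q \<and> int q dvd m)) \<longrightarrow> card (tT q m) = 2 * card (pP q m))"
  proof (cases "odd q")
    case True
    then show ?thesis using count_odd[OF q True] by auto
  next
    case False
    then have t0: "tq q = 0" using adm_param(6)[OF q] adm_param(5)[OF q] by auto
    then have me: "even m" using mpar by simp
    have "q = 4 \<or> q = 8" using adm_cases[OF q] False by auto
    then show ?thesis using count4[OF me] count8[OF me] False by auto
  qed
  have "real (card (pP q m)) = 2 * c_n q n * real (card (tT q m))"
  proof (cases "(even q \<and> 4 dvd m) \<or> (odd q \<and> int q dvd m)")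
    case True
    then have "c_n q n = 1/2" using full_iff by (simp add: c_n_def)
    then show ?thesis using cnt True by simp
  next
    case False
    then have "c_n q n = 1/4" using full_iff by (simp add: c_n_def)
    moreover have "card (tT q m) = 2 * card (pP q m)" using cnt False by blast
    ultimately show ?thesis by simp
  qed
  then show ?thesis using eq1 fin cardL rK by simp
qed


end
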